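(* Let $X, Y$ be two infinite sets forming a partition of $\mathbb{N} = \{0,1,2,\ldots\}$, let $(x(n))_{n\geq 0}$ be the increasing enumeration of $X$ and $(y(n))_{n\geq0}$ the increasing enumeration of $Y$. Suppose that for all $n \geq 0$: $x(x(n)) = 2x(n)$, $y(y(n)) = 2y(n)$, and $|x(n) - y(n)| = 1$. Then either $x = a$ and $y = b$, or $x = b$ and $y = a$. In particular $(x(n)-y(n))_{n\geq 0}$ equals $(1-2t(n))_{n\geq0}$ or $(2t(n)-1)_{n\geq 0}$.
   Context: The Thue–Morse sequence $(t(n))_{n\geq 0}$ is defined by $t(0)=0$, $t(2n)=t(n)$, $t(2n+1)=1-t(n)$. A nonnegative integer is odious if the sum of its binary digits is odd and evil if it is even. $(a(n))_{n\geq0}$ is the increasing sequence of odious numbers and $(b(n))_{n\geq 0}$ the increasing sequence of evil numbers, both indexed from $0$. *)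

theory Defs
  imports "HOL-Library.Infinite_Set"
begin

fun thue_morse :: "nat \<Rightarrow> nat" where
  "thue_morse n = (if n = 0 then 0
     else if even n then thue_morse (n div 2) else 1 - thue_morse (n div 2))"

fun binsum :: "nat \<Rightarrow> nat" where
  "binsum n = (if n = 0 then 0 else n mod 2 + binsum (n div 2))"

definition odious :: "nat \<Rightarrow> bool" where
  "odious n \<longleftrightarrow> odd (binsum n)"

definition evil :: "nat \<Rightarrow> bool" where
  "evil n \<longleftrightarrow> even (binsum n)"

definition odious_seq :: "nat \<Rightarrow> nat" where
  "odious_seq = enumerate {n. odious n}"

definition evil_seq :: "nat \<Rightarrow> nat" where
  "evil_seq = enumerate {n. evil n}"

end

theory Submission
  imports Defs
begin

declare thue_morse.simps[simp del] binsum.simps[simp del]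

lemma tm0[simp]: "thue_morse 0 = 0"
  using thue_morse.simps[of 0] by simp

lemma tm_ev: "n \<noteq> 0 \<Longrightarrow> even n \<Longrightarrow> thue_morse n = thue_morse (n div 2)"
  using thue_morse.simps[of n] by simp

lemma tm_od: "odd n \<Longrightarrow> thue_morse n = 1 - thue_morse (n div 2)"
  using thue_morse.simps[of n] by (cases "n = 0") simp_all

lemma bs0: "binsum 0 = 0"
  using binsum.simps[of 0] by simp

lemma bs: "n \<noteq> 0 \<Longrightarrow> binsum n = n mod 2 + binsum (n div 2)"
  using binsum.simps[of n] by simp

lemma tm_le1: "thue_morse n \<le> 1"
proof (induction n rule: less_induct)
  case (less n)
  show ?case
  proof (cases "n = 0")
    case False
    show ?thesis
    proof (cases "even n")
      case True
      then show ?thesis using tm_ev[OF False True] less[of "n div 2"] False by simp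
    qed (simp add: tm_od)
  qed simp
qed

lemma tm_binsum: "thue_morse n = binsum n mod 2"
proof (induction n rule: less_induct)
  case (less n)
  show ?case
  proof (cases "n = 0")
    case True then show ?thesis by (simp add: bs0)
  next
    case False
    have IH: "thue_morse (n div 2) = binsum (n div 2) mod 2" using less False by simp
    have B: "binsum n = n mod 2 + binsum (n div 2)" using False by (rule bs)
    show ?thesis
    proof (cases "even n")
      case True
      then show ?thesis using tm_ev[OF False True] IH B by simp
    next
      case o: False
      then have "n mod 2 = 1" by presburger
      then show ?thesis using tm_od[OF o] IH B by presburger
    qed
  qed
qed

lemma pairs:
  fixes X Y :: "nat set"
  assumes iX: "infinite X" and iY: "infinite Y"
    and d: "X \<inter> Y = {}" and u: "X \<union> Y = UNIV"
    and ab: "\<And>n. \<bar>int (enumerate X n) - int (enumerate Y n)\<bar> = 1"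
  shows "(enumerate X n = 2*n \<and> enumerate Y n = 2*n+1) \<or> (enumerate X n = 2*n+1 \<and> enumerate Y n = 2*n)"
proof (induction n rule: less_induct)
  case (less n)
  define x where "x = enumerate X"
  define y where "y = enumerate Y"
  have xin: "\<And>k. x k \<in> X" unfolding x_def by (rule enumerate_in_set[OF iX])
  have yin: "\<And>k. y k \<in> Y" unfolding y_def by (rule enumerate_in_set[OF iY])
  have xy: "\<And>k l. x k \<noteq> y l" using xin yin d by (metis disjoint_iff)
  have IH: "\<And>k. k < n \<Longrightarrow> (x k = 2*k \<and> y k = 2*k+1) \<or> (x k = 2*k+1 \<and> y k = 2*k)"
    using less x_def y_def by blast
  have gx: "x n \<ge> 2*n"
  proof (cases n)
    case (Suc k)
    have l: "x k < x n" using Suc iX x_def by simp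
    have "(x k = 2*k \<and> y k = 2*k+1) \<or> (x k = 2*k+1 \<and> y k = 2*k)" using IH[of k] Suc by simp
    moreover have "x n \<noteq> y k" by (rule xy)
    ultimately show ?thesis using l Suc by (elim disjE conjE) arith+
  qed simp
  have gy: "y n \<ge> 2*n"
  proof (cases n)
    case (Suc k)
    have l: "y k < y n" using Suc iY y_def by simp
    have "(x k = 2*k \<and> y k = 2*k+1) \<or> (x k = 2*k+1 \<and> y k = 2*k)" using IH[of k] Suc by simp
    moreover have "x k \<noteq> y n" by (rule xy)
    ultimately show ?thesis using l Suc by (elim disjE conjE) arith+
  qed simp
  have a: "\<bar>int (x n) - int (y n)\<bar> = 1" using ab x_def y_def by simp
  have "2*n \<in> X \<or> 2*n \<in> Y" using u by blast
  then show ?case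
  proof
    assume "2*n \<in> X"
    then obtain m where m: "x m = 2*n" using enumerate_Ex[OF iX] x_def by blast
    have "\<not> m < n" using IH[of m] m by auto
    then have "x n \<le> x m" using iX x_def by simp
    then have "x n = 2*n" using gx m by simp
    then show ?thesis using a gy x_def y_def by auto
  next
    assume "2*n \<in> Y"
    then obtain m where m: "y m = 2*n" using enumerate_Ex[OF iY] y_def by blast
    have "\<not> m < n" using IH[of m] m by auto
    then have "y n \<le> y m" using iY y_def by simp
    then have "y n = 2*n" using gy m by simp
    then show ?thesis using a gx x_def y_def by auto
  qed
qed

lemma main:
  fixes X Y :: "nat set"
  assumes iX: "infinite X" and iY: "infinite Y"
    and d: "X \<inter> Y = {}" and u: "X \<union> Y = UNIV"
    and fx: "\<And>n. enumerate X (enumerate X n) = 2 * enumerate X n"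
    and fy: "\<And>n. enumerate Y (enumerate Y n) = 2 * enumerate Y n"
    and ab: "\<And>n. \<bar>int (enumerate X n) - int (enumerate Y n)\<bar> = 1"
    and z: "0 \<in> X"
  shows "X = {n. evil n} \<and> Y = {n. odious n} \<and>
    (\<forall>n. int (enumerate X n) - int (enumerate Y n) = 2 * int (thue_morse n) - 1)"
proof -
  define x where "x = enumerate X"
  define y where "y = enumerate Y"
  have P: "\<And>n. (x n = 2*n \<and> y n = 2*n+1) \<or> (x n = 2*n+1 \<and> y n = 2*n)"
    unfolding x_def y_def by (rule pairs[OF iX iY d u ab])
  have xin: "\<And>k. x k \<in> X" unfolding x_def by (rule enumerate_in_set[OF iX])
  have yin: "\<And>k. y k \<in> Y" unfolding y_def by (rule enumerate_in_set[OF iY])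
  have X1: "x m = 2*m" if mX: "m \<in> X" for m
  proof -
    obtain k where "enumerate X k = m" using enumerate_Ex[OF iX mX] by blast
    then show "x m = 2*m" unfolding x_def using fx[of k] by simp
  qed
  have Y1: "y m = 2*m" if mY: "m \<in> Y" for m
  proof -
    obtain k where "enumerate Y k = m" using enumerate_Ex[OF iY mY] by blast
    then show "y m = 2*m" unfolding y_def using fy[of k] by simp
  qed
  have XY: "\<And>m. m \<in> X \<longleftrightarrow> m \<notin> Y" using d u by blast
  have c1: "2*m \<in> X \<and> 2*m+1 \<in> Y" if "m \<in> X" for m
  proof -
    have h: "x m = 2*m" using X1 that .
    then have "y m = 2*m+1" using P[of m] by auto
    then show ?thesis using h xin[of m] yin[of m] by simp
  qed
  have c2: "2*m \<in> Y \<and> 2*m+1 \<in> X" if "m \<in> Y" for m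
  proof -
    have h: "y m = 2*m" using Y1 that .
    then have "x m = 2*m+1" using P[of m] by auto
    then show ?thesis using h xin[of m] yin[of m] by simp
  qed
  have T: "\<And>m. m \<in> X \<longleftrightarrow> thue_morse m = 0"
  proof -
    fix m show "m \<in> X \<longleftrightarrow> thue_morse m = 0"
    proof (induction m rule: less_induct)
      case (less m)
      show ?case
      proof (cases "m = 0")
        case True then show ?thesis using z by simp
      next
        case False
        define k where "k = m div 2"
        have lt: "k < m" using False k_def by simp
        have IH: "k \<in> X \<longleftrightarrow> thue_morse k = 0" using less lt by blast
        have tk: "thue_morse k \<le> 1" by (rule tm_le1)
        show ?thesis
        proof (cases "even m")
          case True
          then have m: "m = 2*k" using k_def by simp
          have tm: "thue_morse m = thue_morse k" using tm_ev[OF False True] k_def by simp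
          show ?thesis
          proof (cases "k \<in> X")
            case True
            then show ?thesis using c1[OF True] m tm IH by simp
          next
            case kY: False
            then have "k \<in> Y" using XY[of k] by simp
            then have "m \<in> Y" using c2[OF \<open>k \<in> Y\<close>] m by simp
            then show ?thesis using XY[of m] tm IH kY by simp
          qed
        next
          case o: False
          then have m: "m = 2*k+1" using k_def by simp
          have tm: "thue_morse m = 1 - thue_morse k" using tm_od[OF o] k_def by simp
          show ?thesis
          proof (cases "k \<in> X")
            case True
            then have "m \<in> Y" using c1[OF True] m by simp
            then show ?thesis using XY[of m] tm IH True by simp
          next
            case kY: False
            then have "k \<in> Y" using XY[of k] by simp
            then have "m \<in> X" using c2[OF \<open>k \<in> Y\<close>] m by simp
            moreover have "thue_morse k = 1" using IH kY tk by simp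
            ultimately show ?thesis using tm by simp
          qed
        qed
      qed
    qed
  qed
  have ev: "evil m \<longleftrightarrow> thue_morse m = 0" for m
    unfolding evil_def tm_binsum[of m] by presburger
  have od: "odious m \<longleftrightarrow> thue_morse m \<noteq> 0" for m
    unfolding odious_def tm_binsum[of m] by presburger
  have "X = {n. evil n}" using T ev by blast
  moreover have "Y = {n. odious n}" using T od XY by blast
  moreover have "\<forall>n. int (x n) - int (y n) = 2 * int (thue_morse n) - 1"
  proof
    fix n
    have t: "thue_morse n \<le> 1" by (rule tm_le1)
    show "int (x n) - int (y n) = 2 * int (thue_morse n) - 1"
    proof (cases "n \<in> X")
      case True
      then have "x n = 2*n" using X1 by blast
      then have "y n = 2*n+1" using P[of n] by auto
      then show ?thesis using \<open>x n = 2*n\<close> T True by simp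
    next
      case False
      then have "thue_morse n = 1" using T t by simp
      moreover have "y n = 2*n" using False XY Y1 by blast
      moreover then have "x n = 2*n+1" using P[of n] by auto
      ultimately show ?thesis by simp
    qed
  qed
  ultimately show ?thesis unfolding x_def y_def by blast
qed

theorem theorem4:
  fixes X Y :: "nat set"
  assumes "infinite X" and "infinite Y"
    and "X \<inter> Y = {}" and "X \<union> Y = UNIV"
    and "\<And>n. enumerate X (enumerate X n) = 2 * enumerate X n"
    and "\<And>n. enumerate Y (enumerate Y n) = 2 * enumerate Y n"
    and "\<And>n. \<bar>int (enumerate X n) - int (enumerate Y n)\<bar> = 1"
  shows "((enumerate X = odious_seq \<and> enumerate Y = evil_seq) \<or>
          (enumerate X = evil_seq \<and> enumerate Y = odious_seq))
         \<and> ((\<lambda>n. int (enumerate X n) - int (enumerate Y n)) = (\<lambda>n. 1 - 2 * int (thue_morse n)) \<or>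
            (\<lambda>n. int (enumerate X n) - int (enumerate Y n)) = (\<lambda>n. 2 * int (thue_morse n) - 1))"
proof (cases "0 \<in> X")
  case True
  from main[OF assms True] show ?thesis
    unfolding odious_seq_def evil_seq_def by auto
next
  case False
  then have "0 \<in> Y" using assms(4) by blast
  moreover have "\<And>n. \<bar>int (enumerate Y n) - int (enumerate X n)\<bar> = 1" using assms(7) by (simp add: abs_minus_commute)
  moreover have "Y \<inter> X = {}" "Y \<union> X = UNIV" using assms(3,4) by blast+
  ultimately have M: "Y = {n. evil n} \<and> X = {n. odious n} \<and>
    (\<forall>n. int (enumerate Y n) - int (enumerate X n) = 2 * int (thue_morse n) - 1)"
    using main[of Y X] assms by blast
  then have "(\<lambda>n. int (enumerate X n) - int (enumerate Y n)) = (\<lambda>n. 1 - 2 * int (thue_morse n))"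
    by (auto simp: fun_eq_iff algebra_simps)
  with M show ?thesis unfolding odious_seq_def evil_seq_def by auto
qed

end
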